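(* Let $J\in\{1,\dots,N-1\}$ be the index with $\lambda_J\le\lambda_{\rm avg}<\lambda_{J+1}$. Let $K\in\{1,\dots,J\}$ and let $h$ be a graph filter with $h(\lambda_n)\ne 0$ for $n=1,\dots,K$, and define $$\eta_K=\frac{\max\{|h(\lambda_{K+1})|,\dots,|h(\lambda_N)|\}}{\min\{|h(\lambda_1)|,\dots,|h(\lambda_K)|\}} .$$ If $$\eta_K^2<\frac{\sum_{n=1}^K(\lambda_n-\lambda_{\rm avg})}{\sum_{n=1}^J(\lambda_n-\lambda_{\rm avg})},$$ then $h$ is a smooth graph filter, i.e. $r(h)<1$. (In particular, for $K=J$, every graph filter with $\eta_J<1$ is smooth.)
   Context: Let $\mathcal G$ be an undirected, weighted, connected graph on $N\ge 2$ nodes with symmetric weighted adjacency matrix $W\in\mathbb R^{N\times N}$, $W_{k,n}\ge 0$. Its Laplacian is $L=\mathrm{diag}(W\mathbf 1)-W$, with eigendecomposition $L=V\,\mathrm{diag}(\lambda_1,\dots,\lambda_N)\,V^T$, $V$ orthogonal, and eigenvalues ordered $0=\lambda_1\le\lambda_2\le\cdots\le\lambda_N$ (connectedness gives $\lambda_2>0$). Put $\lambda_{\rm avg}=\frac1N\sum_{n=1}^N\lambda_n$. A graph filter is a real function $h$ on the eigenvalues, satisfying $h(\lambda_m)=h(\lambda_k)$ whenever $\lambda_m=\lambda_k$, acting as the matrix $h(L)=V\,\mathrm{diag}(h(\lambda_1),\dots,h(\lambda_N))\,V^T$. For a graph filter with $h(\lambda_n)$ not all zero, its smoothness ratio is $r(h)=\lambda_{\rm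 avg}^{-1}\sum_n\lambda_n h^2(\lambda_n)/\sum_n h^2(\lambda_n)$, and $h$ is called a smooth graph filter if $r(h)<1$. A graph filter with $\eta_K<1$ is called a graph low-pass filter of order $K$. *)

theory Defs
  imports Complex_Main
begin

text \<open>Graph on nodes 1..N, weights W k n, all matrices as nat-indexed functions (1-based).\<close>

definition laplacian :: "nat \<Rightarrow> (nat \<Rightarrow> nat \<Rightarrow> real) \<Rightarrow> nat \<Rightarrow> nat \<Rightarrow> real" where
  "laplacian N W k n = (if k = n then (\<Sum>m=1..N. W k m) else 0) - W k n"

definition graph_edges :: "nat \<Rightarrow> (nat \<Rightarrow> nat \<Rightarrow> real) \<Rightarrow> (nat \<times> nat) set" where
  "graph_edges N W = {(k, n). k \<in> {1..N} \<and> n \<in> {1..N} \<and> W k n > 0}"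

definition connected_graph :: "nat \<Rightarrow> (nat \<Rightarrow> nat \<Rightarrow> real) \<Rightarrow> bool" where
  "connected_graph N W \<longleftrightarrow> (\<forall>k\<in>{1..N}. \<forall>n\<in>{1..N}. (k, n) \<in> (graph_edges N W)\<^sup>*)"

definition orthogonal_mat :: "nat \<Rightarrow> (nat \<Rightarrow> nat \<Rightarrow> real) \<Rightarrow> bool" where
  "orthogonal_mat N V \<longleftrightarrow>
     (\<forall>i\<in>{1..N}. \<forall>j\<in>{1..N}. (\<Sum>m=1..N. V m i * V m j) = (if i = j then 1 else 0))"

definition eigendecomp :: "nat \<Rightarrow> (nat \<Rightarrow> nat \<Rightarrow> real) \<Rightarrow> (nat \<Rightarrow> nat \<Rightarrow> real) \<Rightarrow> (nat \<Rightarrow> real) \<Rightarrow> bool" where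
  "eigendecomp N W V lam \<longleftrightarrow> orthogonal_mat N V \<and>
     (\<forall>k\<in>{1..N}. \<forall>n\<in>{1..N}. laplacian N W k n = (\<Sum>m=1..N. V k m * lam m * V n m))"

definition lam_avg :: "nat \<Rightarrow> (nat \<Rightarrow> real) \<Rightarrow> real" where
  "lam_avg N lam = (\<Sum>n=1..N. lam n) / real N"

definition smoothness_ratio :: "nat \<Rightarrow> (nat \<Rightarrow> real) \<Rightarrow> (real \<Rightarrow> real) \<Rightarrow> real" where
  "smoothness_ratio N lam h =
     (\<Sum>n=1..N. lam n * (h (lam n))\<^sup>2) / (\<Sum>n=1..N. (h (lam n))\<^sup>2) / lam_avg N lam"

definition smooth_filter :: "nat \<Rightarrow> (nat \<Rightarrow> real) \<Rightarrow> (real \<Rightarrow> real) \<Rightarrow> bool" where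
  "smooth_filter N lam h \<longleftrightarrow> smoothness_ratio N lam h < 1"

definition eta :: "nat \<Rightarrow> (nat \<Rightarrow> real) \<Rightarrow> (real \<Rightarrow> real) \<Rightarrow> nat \<Rightarrow> real" where
  "eta N lam h K = Max ((\<lambda>n. \<bar>h (lam n)\<bar>) ` {K+1..N}) / Min ((\<lambda>n. \<bar>h (lam n)\<bar>) ` {1..K})"

end

theory Submission
  imports Defs
begin

theorem claim1:
  fixes N J K :: nat and W V :: "nat \<Rightarrow> nat \<Rightarrow> real" and lam :: "nat \<Rightarrow> real"
    and h :: "real \<Rightarrow> real"
  assumes "N \<ge> 2"
    and "\<forall>k\<in>{1..N}. \<forall>n\<in>{1..N}. W k n = W n k"
    and "\<forall>k\<in>{1..N}. \<forall>n\<in>{1..N}. W k n \<ge> 0"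
    and "connected_graph N W"
    and "eigendecomp N W V lam"
    and "\<forall>m\<in>{1..N}. \<forall>n\<in>{1..N}. m \<le> n \<longrightarrow> lam m \<le> lam n"
    and "J \<in> {1..N-1}" and "lam J \<le> lam_avg N lam" and "lam_avg N lam < lam (J+1)"
    and "K \<in> {1..J}"
    and "\<forall>n\<in>{1..K}. h (lam n) \<noteq> 0"
    and "(eta N lam h K)\<^sup>2 <
          (\<Sum>n=1..K. lam n - lam_avg N lam) / (\<Sum>n=1..J. lam n - lam_avg N lam)"
  shows "smooth_filter N lam h"
proof -
  define a where "a = lam_avg N lam"
  define g where "g n = (h (lam n))\<^sup>2" for n
  define d where "d n = lam n - a" for n
  have KJ: "1 \<le> K" "K \<le> J" "1 \<le> J" "J < N" using assms(7,10) by auto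
  have orth: "\<And>m. m \<in> {1..N} \<Longrightarrow> (\<Sum>k=1..N. V k m * V k m) = 1"
    using assms(5) unfolding eigendecomp_def orthogonal_mat_def by auto
  have tr: "(\<Sum>k=1..N. laplacian N W k k) = (\<Sum>m=1..N. lam m)"
  proof -
    have "(\<Sum>k=1..N. laplacian N W k k) = (\<Sum>k=1..N. \<Sum>m=1..N. V k m * lam m * V k m)"
      using assms(5) unfolding eigendecomp_def by (intro sum.cong) auto
    also have "\<dots> = (\<Sum>m=1..N. \<Sum>k=1..N. lam m * (V k m * V k m))"
      by (subst sum.swap) (simp add: algebra_simps)
    also have "\<dots> = (\<Sum>m=1..N. lam m * (\<Sum>k=1..N. V k m * V k m))"
      by (simp add: sum_distrib_left)
    also have "\<dots> = (\<Sum>m=1..N. lam m)" using orth by (intro sum.cong) auto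
    finally show ?thesis .
  qed
  have "\<And>k. k \<in> {1..N} \<Longrightarrow> laplacian N W k k \<ge> 0"
  proof -
    fix k assume k: "k \<in> {1..N}"
    have "W k k \<le> (\<Sum>m=1..N. W k m)"
      using k assms(3) by (intro member_le_sum) auto
    thus "laplacian N W k k \<ge> 0" unfolding laplacian_def by simp
  qed
  hence "(\<Sum>k=1..N. laplacian N W k k) \<ge> 0" by (intro sum_nonneg) auto
  hence "(\<Sum>m=1..N. lam m) \<ge> 0" using tr by simp
  hence a0: "a \<ge> 0" unfolding a_def lam_avg_def by simp
  have sumd: "(\<Sum>n=1..N. d n) = 0"
    using assms(1) unfolding d_def a_def lam_avg_def by (simp add: sum_subtractf)
  have dle: "\<And>n. n \<in> {1..J} \<Longrightarrow> d n \<le> 0"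
    using assms(6,8) KJ unfolding d_def a_def
    by (metis atLeastAtMost_iff diff_le_0_iff_le order_trans less_imp_le_nat)
  have dgt: "\<And>n. n \<in> {J+1..N} \<Longrightarrow> d n > 0"
    using assms(6,9) KJ unfolding d_def a_def
    by (smt (verit, best) atLeastAtMost_iff le_add2 le_trans)
  define M where "M = Max ((\<lambda>n. \<bar>h (lam n)\<bar>) ` {K+1..N})"
  define m where "m = Min ((\<lambda>n. \<bar>h (lam n)\<bar>) ` {1..K})"
  have mle: "\<And>n. n \<in> {1..K} \<Longrightarrow> m \<le> \<bar>h (lam n)\<bar>" unfolding m_def by simp
  have mpos: "m > 0"
  proof -
    have "m \<in> (\<lambda>n. \<bar>h (lam n)\<bar>) ` {1..K}" unfolding m_def using KJ
      by (intro Min_in) auto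
    thus ?thesis using assms(11) by auto
  qed
  have Mge: "\<And>n. n \<in> {K+1..N} \<Longrightarrow> \<bar>h (lam n)\<bar> \<le> M" unfolding M_def by simp
  have M0: "M \<ge> 0" using Mge[of N] KJ by auto
  have gm: "\<And>n. n \<in> {1..K} \<Longrightarrow> m^2 \<le> g n"
    unfolding g_def using mle mpos by (metis abs_ge_zero less_imp_le power2_abs power_mono)
  have gM: "\<And>n. n \<in> {J+1..N} \<Longrightarrow> g n \<le> M^2"
  proof -
    fix n assume n: "n \<in> {J+1..N}"
    hence "\<bar>h (lam n)\<bar> \<le> M" using Mge KJ by auto
    hence "\<bar>h (lam n)\<bar>^2 \<le> M^2" by (intro power_mono) auto
    thus "g n \<le> M^2" unfolding g_def by simp
  qed
  define A where "A = (\<Sum>n=1..K. d n)"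
  define B where "B = (\<Sum>n=1..J. d n)"
  have eta: "eta N lam h K = M / m" unfolding eta_def M_def m_def by simp
  have hyp: "(M/m)^2 < A / B" using assms(12) eta unfolding A_def B_def d_def a_def by simp
  have B0: "B \<le> 0" unfolding B_def using dle by (intro sum_nonpos) auto
  have Bn: "B \<noteq> 0" using hyp by (metis div_by_0 not_less zero_le_power2)
  hence Bneg: "B < 0" using B0 by simp
  have "(M/m)^2 * B > A" using hyp Bneg by (simp add: pos_less_divide_eq neg_less_divide_eq mult.commute)
  hence key: "M^2 * B > m^2 * A" using mpos by (simp add: power_divide field_simps)
  have spl1: "(\<Sum>n=1..N. d n * g n) = (\<Sum>n=1..J. d n * g n) + (\<Sum>n=J+1..N. d n * g n)"
    using sum.ub_add_nat[of 1 J "\<lambda>n. d n * g n" "N - J"] KJ by simp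
  have spl2: "(\<Sum>n=1..J. d n * g n) = (\<Sum>n=1..K. d n * g n) + (\<Sum>n=K+1..J. d n * g n)"
    using sum.ub_add_nat[of 1 K "\<lambda>n. d n * g n" "J - K"] KJ by simp
  have splN: "(\<Sum>n=1..N. d n) = B + (\<Sum>n=J+1..N. d n)"
    using sum.ub_add_nat[of 1 J d "N - J"] KJ unfolding B_def by simp
  have t1: "(\<Sum>n=1..K. d n * g n) \<le> (\<Sum>n=1..K. d n * m^2)"
    using dle gm KJ by (intro sum_mono) (auto intro: mult_left_mono_neg)
  have t2: "(\<Sum>n=K+1..J. d n * g n) \<le> 0"
    using dle KJ by (intro sum_nonpos) (auto simp: g_def mult_nonpos_nonneg)
  have t3: "(\<Sum>n=J+1..N. d n * g n) \<le> (\<Sum>n=J+1..N. d n * M^2)"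
    using dgt gM by (intro sum_mono) (auto intro: mult_left_mono less_imp_le)
  have "(\<Sum>n=1..N. d n * g n) \<le> m^2 * A + M^2 * (\<Sum>n=J+1..N. d n)"
    using spl1 spl2 t1 t2 t3 unfolding A_def
    by (simp add: sum_distrib_right[symmetric] mult.commute)
  also have "\<dots> = m^2 * A - M^2 * B" proof -
    have "(\<Sum>n=J+1..N. d n) = - B" using splN sumd by simp
    thus ?thesis by simp
  qed
  also have "\<dots> < 0" using key by simp
  finally have neg: "(\<Sum>n=1..N. d n * g n) < 0" .
  have S2: "(\<Sum>n=1..N. g n) > 0"
  proof -
    have "g 1 > 0" using assms(11) KJ unfolding g_def by simp
    moreover have "g 1 \<le> (\<Sum>n=1..N. g n)" using KJ
      by (intro member_le_sum) (auto simp: g_def)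
    ultimately show ?thesis by simp
  qed
  have eqd: "(\<Sum>n=1..N. d n * g n) = (\<Sum>n=1..N. lam n * g n) - a * (\<Sum>n=1..N. g n)"
    unfolding d_def by (simp add: algebra_simps sum_subtractf sum_distrib_left)
  have S1: "(\<Sum>n=1..N. lam n * g n) < a * (\<Sum>n=1..N. g n)" using neg eqd by simp
  show ?thesis
  proof (cases "a = 0")
    case True thus ?thesis unfolding smooth_filter_def smoothness_ratio_def a_def by simp
  next
    case False
    hence ap: "a > 0" using a0 by simp
    have "(\<Sum>n=1..N. lam n * g n) / (\<Sum>n=1..N. g n) < a"
      using S1 S2 by (simp add: divide_less_eq mult.commute)
    hence "(\<Sum>n=1..N. lam n * g n) / (\<Sum>n=1..N. g n) / a < 1" using ap by (subst divide_less_eq) simp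
    thus ?thesis unfolding smooth_filter_def smoothness_ratio_def a_def g_def by simp
  qed
qed

end
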